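(* Let $(\beta,\gamma)$ be antiferromagnetic and $\lambda>0$. Suppose $\mathcal{T}_1,\dots,\mathcal{T}_k$ are rooted trees with roots $\rho_1,\dots,\rho_k$, effective fields $R_1,\dots,R_k$ and magnetization gaps $M_1,\dots,M_k$. Let $\mathcal{T}$ be the tree with root $\rho$, consisting of an edge $\{\rho,u\}$ together with $\mathcal{T}_1,\dots,\mathcal{T}_k$, where the roots $\rho_1,\dots,\rho_k$ are all identified with $u$. Let $R,M$ be the effective field and magnetization gap of $\mathcal{T}$. Then $$R=\frac{1+\gamma\lambda\prod_{i=1}^kR_i}{\beta+\lambda\prod_{i=1}^kR_i},\qquad M=1-\omega(R)\Big(1+\sum_{i=1}^k(M_i-1)\Big),\qquad\text{where }\ \omega(R):=\frac{1+\beta\gamma-\beta R-\gamma/R}{1-\beta\gamma}.$$ Moreover $R\in(\gamma,1/\beta)$ and $0<\omega(R)<1$.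
   Context: A pair $(\beta,\gamma)$ with $\beta,\gamma\geq0$ is antiferromagnetic if $\beta\gamma\in[0,1)$ and at least one is nonzero. For a graph $G=(V,E)$ and $\lambda>0$, $\mu_{G;\beta,\gamma,\lambda}(\sigma)=\lambda^{|\sigma|}\beta^{m_0(\sigma)}\gamma^{m_1(\sigma)}/Z$ for $\sigma:V\to\{0,1\}$, $|\sigma|=\sum_v\sigma(v)$, $m_0,m_1$ the numbers of edges with both endpoints spin $0$, resp. spin $1$, convention $0^0=1$. For a rooted tree $\mathcal{T}$ with root $\rho$ and $\mu=\mu_{\mathcal{T};\beta,\gamma,\lambda}$, the effective field is $R_{\mathcal{T}}=\frac{1}{\lambda}\frac{\mu(\sigma(\rho)=1)}{\mu(\sigma(\rho)=0)}$ and the magnetization gap is $M_{\mathcal{T}}=\mathbf{E}_\mu[|\sigma|\mid\sigma(\rho)=1]-\mathbf{E}_\mu[|\sigma|\mid\sigma(\rho)=0]$ (counting all vertices including the root). When $\beta=0$, $1/\beta$ is interpreted as $+\infty$. *)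

theory Defs
  imports Complex_Main
begin

definition simple_graph :: "'a set \<Rightarrow> 'a set set \<Rightarrow> bool" where
  "simple_graph V E \<longleftrightarrow> finite V \<and> (\<forall>e\<in>E. e \<subseteq> V \<and> card e = 2)"

definition reach :: "'a set set \<Rightarrow> 'a \<Rightarrow> 'a \<Rightarrow> bool" where
  "reach E = (\<lambda>x y. {x, y} \<in> E)\<^sup>*\<^sup>*"

definition connected_graph :: "'a set \<Rightarrow> 'a set set \<Rightarrow> bool" where
  "connected_graph V E \<longleftrightarrow> (\<forall>x\<in>V. \<forall>y\<in>V. reach E x y)"

definition acyclic_graph :: "'a set set \<Rightarrow> bool" where
  "acyclic_graph E \<longleftrightarrow> (\<forall>x y. {x, y} \<in> E \<longrightarrow> \<not> reach (E - {{x, y}}) x y)"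

definition rooted_tree :: "'a set \<Rightarrow> 'a set set \<Rightarrow> 'a \<Rightarrow> bool" where
  "rooted_tree V E r \<longleftrightarrow> simple_graph V E \<and> r \<in> V \<and> connected_graph V E \<and> acyclic_graph E"

definition antiferro :: "real \<Rightarrow> real \<Rightarrow> bool" where
  "antiferro b g \<longleftrightarrow> b \<ge> 0 \<and> g \<ge> 0 \<and> b * g < 1 \<and> (b \<noteq> 0 \<or> g \<noteq> 0)"

(* A spin configuration sigma : V -> {0,1} is identified with the set S = sigma^{-1}(1) \<subseteq> V.
   |sigma| = card S, m_1 = #edges inside S, m_0 = #edges inside V - S.
   Powers are nat-exponent powers, so 0^0 = 1. *)
definition configs :: "'a set \<Rightarrow> 'a set set" where
  "configs V = Pow V"

definition gibbs_weight :: "real \<Rightarrow> real \<Rightarrow> real \<Rightarrow> 'a set \<Rightarrow> 'a set set \<Rightarrow> 'a set \<Rightarrow> real" where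
  "gibbs_weight b g l V E S =
     l ^ card S * b ^ card {e \<in> E. e \<subseteq> V - S} * g ^ card {e \<in> E. e \<subseteq> S}"

definition partition_fn :: "real \<Rightarrow> real \<Rightarrow> real \<Rightarrow> 'a set \<Rightarrow> 'a set set \<Rightarrow> real" where
  "partition_fn b g l V E = (\<Sum>S\<in>configs V. gibbs_weight b g l V E S)"

definition gibbs :: "real \<Rightarrow> real \<Rightarrow> real \<Rightarrow> 'a set \<Rightarrow> 'a set set \<Rightarrow> 'a set \<Rightarrow> real" where
  "gibbs b g l V E S = gibbs_weight b g l V E S / partition_fn b g l V E"

definition gibbs_prob :: "real \<Rightarrow> real \<Rightarrow> real \<Rightarrow> 'a set \<Rightarrow> 'a set set \<Rightarrow> 'a set set \<Rightarrow> real" where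
  "gibbs_prob b g l V E A = (\<Sum>S\<in>configs V \<inter> A. gibbs b g l V E S)"

definition gibbs_cond_size :: "real \<Rightarrow> real \<Rightarrow> real \<Rightarrow> 'a set \<Rightarrow> 'a set set \<Rightarrow> 'a set set \<Rightarrow> real" where
  "gibbs_cond_size b g l V E A =
     (\<Sum>S\<in>configs V \<inter> A. real (card S) * gibbs b g l V E S) / gibbs_prob b g l V E A"

definition eff_field :: "real \<Rightarrow> real \<Rightarrow> real \<Rightarrow> 'a set \<Rightarrow> 'a set set \<Rightarrow> 'a \<Rightarrow> real" where
  "eff_field b g l V E r =
     (1 / l) * (gibbs_prob b g l V E {S. r \<in> S} / gibbs_prob b g l V E {S. r \<notin> S})"

definition mag_gap :: "real \<Rightarrow> real \<Rightarrow> real \<Rightarrow> 'a set \<Rightarrow> 'a set set \<Rightarrow> 'a \<Rightarrow> real" where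
  "mag_gap b g l V E r =
     gibbs_cond_size b g l V E {S. r \<in> S} - gibbs_cond_size b g l V E {S. r \<notin> S}"

definition omega :: "real \<Rightarrow> real \<Rightarrow> real \<Rightarrow> real" where
  "omega b g R = (1 + b * g - b * R - g / R) / (1 - b * g)"

end

theory Submission
  imports Defs
begin

definition cf :: "'a set \<Rightarrow> 'a \<Rightarrow> bool \<Rightarrow> 'a set set" where
  "cf V u c = {S. S \<subseteq> V \<and> (u \<in> S \<longleftrightarrow> c)}"

definition ZZ :: "real \<Rightarrow> real \<Rightarrow> real \<Rightarrow> 'a set \<Rightarrow> 'a set set \<Rightarrow> 'a \<Rightarrow> bool \<Rightarrow> real" where
  "ZZ b g l V E u c = (\<Sum>S\<in>cf V u c. gibbs_weight b g l V E S)"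

definition AA :: "real \<Rightarrow> real \<Rightarrow> real \<Rightarrow> 'a set \<Rightarrow> 'a set set \<Rightarrow> 'a \<Rightarrow> bool \<Rightarrow> real" where
  "AA b g l V E u c = (\<Sum>S\<in>cf V u c. real (card S) * gibbs_weight b g l V E S)"

lemma finite_cf: "finite V \<Longrightarrow> finite (cf V u c)"
  unfolding cf_def by (rule finite_subset[of _ "Pow V"]) auto

lemma glue_sum:
  fixes f :: "'a set \<Rightarrow> real"
  assumes "finite V1" "finite V2" "V1 \<inter> V2 = {u}"
  shows "(\<Sum>S\<in>{S. S \<subseteq> V1 \<union> V2 \<and> (u\<in>S \<longleftrightarrow> c) \<and> P (S \<inter> V1)}. f S) =
         (\<Sum>S1\<in>{S. S \<subseteq> V1 \<and> (u\<in>S \<longleftrightarrow> c) \<and> P S}. \<Sum>S2\<in>cf V2 u c. f (S1 \<union> S2))"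
proof -
  have "(\<Sum>S1\<in>{S. S \<subseteq> V1 \<and> (u\<in>S \<longleftrightarrow> c) \<and> P S}. \<Sum>S2\<in>cf V2 u c. f (S1 \<union> S2))
     = (\<Sum>p\<in>{S. S \<subseteq> V1 \<and> (u\<in>S \<longleftrightarrow> c) \<and> P S} \<times> cf V2 u c. f (fst p \<union> snd p))"
    unfolding sum.cartesian_product by (simp add: case_prod_beta)
  also have "\<dots> = (\<Sum>S\<in>{S. S \<subseteq> V1 \<union> V2 \<and> (u\<in>S \<longleftrightarrow> c) \<and> P (S \<inter> V1)}. f S)"
  proof (rule sum.reindex_bij_witness[of _ "\<lambda>S. (S \<inter> V1, S \<inter> V2)" "\<lambda>p. fst p \<union> snd p"])
    fix p assume p: "p \<in> {S. S \<subseteq> V1 \<and> (u\<in>S \<longleftrightarrow> c) \<and> P S} \<times> cf V2 u c"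
    obtain A B where AB: "p = (A, B)" by (cases p)
    have "(A \<union> B) \<inter> V1 = A" "(A \<union> B) \<inter> V2 = B"
      using p assms(3) unfolding AB cf_def by auto
    then show "((fst p \<union> snd p) \<inter> V1, (fst p \<union> snd p) \<inter> V2) = p" 
      "fst p \<union> snd p \<in> {S. S \<subseteq> V1 \<union> V2 \<and> (u\<in>S \<longleftrightarrow> c) \<and> P (S \<inter> V1)}"
      using p unfolding AB cf_def by auto
  next
    fix S assume "S \<in> {S. S \<subseteq> V1 \<union> V2 \<and> (u\<in>S \<longleftrightarrow> c) \<and> P (S \<inter> V1)}"
    then show "fst (S \<inter> V1, S \<inter> V2) \<union> snd (S \<inter> V1, S \<inter> V2) = S"
      "(S \<inter> V1, S \<inter> V2) \<in> {S. S \<subseteq> V1 \<and> (u\<in>S \<longleftrightarrow> c) \<and> P S} \<times> cf V2 u c"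
      using assms(3) unfolding cf_def by auto
  qed simp
  finally show ?thesis by simp
qed

lemma card2_not_sub1: "card e = 2 \<Longrightarrow> \<not> e \<subseteq> {u}"
  using card_mono[of "{u}" e] by auto

lemma ac_help:
  fixes x d p q b1 b2 g1 g2 :: real
  assumes "x * d = p * q"
  shows "x * (b1*b2) * (g1*g2) * d = p * b1 * g1 * (q * b2 * g2)"
proof -
  have "x * (b1*b2) * (g1*g2) * d = (x*d) * (b1*b2*g1*g2)" by (simp only: mult_ac)
  also have "\<dots> = (p*q) * (b1*b2*g1*g2)" using assms by simp
  also have "\<dots> = p * b1 * g1 * (q * b2 * g2)" by (simp only: mult_ac)
  finally show ?thesis .
qed

lemma glue_weight:
  assumes fin: "finite V1" "finite V2" and int: "V1 \<inter> V2 = {u}"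
    and E1: "\<forall>e\<in>E1. e \<subseteq> V1 \<and> card e = 2" and E2: "\<forall>e\<in>E2. e \<subseteq> V2 \<and> card e = 2"
    and S1: "S1 \<subseteq> V1" and S2: "S2 \<subseteq> V2" and c: "u \<in> S1 \<longleftrightarrow> u \<in> S2"
  shows "gibbs_weight b g l (V1\<union>V2) (E1\<union>E2) (S1\<union>S2) * (if u \<in> S1 then l else 1)
         = gibbs_weight b g l V1 E1 S1 * gibbs_weight b g l V2 E2 S2"
    and "card (S1 \<union> S2) + (if u\<in>S1 then 1 else 0) = card S1 + card S2"
proof -
  have fS1: "finite S1" "finite S2" using finite_subset[OF S1 fin(1)] finite_subset[OF S2 fin(2)] by auto
  have int2: "S1 \<inter> S2 = (if u \<in> S1 then {u} else {})" using S1 S2 int c by auto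
  show cd: "card (S1 \<union> S2) + (if u\<in>S1 then 1 else 0) = card S1 + card S2"
  proof -
    have "card (S1 \<union> S2) + card (S1 \<inter> S2) = card S1 + card S2" using card_Un_Int[OF fS1] by simp
    then show ?thesis unfolding int2 by (cases "u \<in> S1") simp_all
  qed
  have "E1 \<subseteq> Pow V1" "E2 \<subseteq> Pow V2" using E1 E2 by blast+
  then have fE1: "finite E1" and fE2: "finite E2" using fin finite_subset by (metis finite_Pow_iff)+
  have dE: "E1 \<inter> E2 = {}"
  proof (rule ccontr)
    assume "E1 \<inter> E2 \<noteq> {}"
    then obtain e where "e \<in> E1" "e \<in> E2" by auto
    then have "e \<subseteq> V1" "e \<subseteq> V2" "card e = 2" using E1 E2 by auto
    then have "e \<subseteq> {u}" "card e = 2" using int by blast+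
    then show False using card2_not_sub1[of e u] by simp
  qed
  have k1: "e \<inter> S2 \<subseteq> S1" if "e \<in> E1" for e
  proof
    fix x assume x: "x \<in> e \<inter> S2"
    then have "x \<in> V1 \<inter> V2" using E1 that S2 by blast
    then have "x = u" using int by blast
    then show "x \<in> S1" using x c by blast
  qed
  have k2: "e \<inter> S1 \<subseteq> S2" if "e \<in> E2" for e
  proof
    fix x assume x: "x \<in> e \<inter> S1"
    then have "x \<in> V1 \<inter> V2" using E2 that S1 by blast
    then have "x = u" using int by blast
    then show "x \<in> S2" using x c by blast
  qed
  have q1: "e \<subseteq> (V1 \<union> V2) - (S1 \<union> S2) \<longleftrightarrow> e \<subseteq> V1 - S1" "e \<subseteq> S1 \<union> S2 \<longleftrightarrow> e \<subseteq> S1"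
    if "e \<in> E1" for e
    using k1[OF that] E1 that by blast+
  have q2: "e \<subseteq> (V1 \<union> V2) - (S1 \<union> S2) \<longleftrightarrow> e \<subseteq> V2 - S2" "e \<subseteq> S1 \<union> S2 \<longleftrightarrow> e \<subseteq> S2"
    if "e \<in> E2" for e
    using k2[OF that] E2 that by blast+
  have e0: "{e \<in> E1 \<union> E2. e \<subseteq> (V1 \<union> V2) - (S1 \<union> S2)}
      = {e \<in> E1. e \<subseteq> V1 - S1} \<union> {e \<in> E2. e \<subseteq> V2 - S2}"
    using q1(1) q2(1) by blast
  have e1: "{e \<in> E1 \<union> E2. e \<subseteq> S1 \<union> S2}
      = {e \<in> E1. e \<subseteq> S1} \<union> {e \<in> E2. e \<subseteq> S2}"
    using q1(2) q2(2) by blast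
  have c0: "card {e \<in> E1 \<union> E2. e \<subseteq> (V1 \<union> V2) - (S1 \<union> S2)}
     = card {e \<in> E1. e \<subseteq> V1 - S1} + card {e \<in> E2. e \<subseteq> V2 - S2}"
    unfolding e0 by (rule card_Un_disjoint) (use fE1 fE2 dE in auto)
  have c1: "card {e \<in> E1 \<union> E2. e \<subseteq> S1 \<union> S2}
     = card {e \<in> E1. e \<subseteq> S1} + card {e \<in> E2. e \<subseteq> S2}"
    unfolding e1 by (rule card_Un_disjoint) (use fE1 fE2 dE in auto)
  have lp: "l ^ card (S1 \<union> S2) * (if u \<in> S1 then l else 1) = l ^ card S1 * l ^ card S2"
  proof -
    have "l ^ card (S1 \<union> S2) * (if u \<in> S1 then l else 1) = l ^ (card (S1 \<union> S2) + (if u\<in>S1 then 1 else 0))"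
      by simp
    also have "\<dots> = l ^ card S1 * l ^ card S2" unfolding cd by (simp add: power_add)
    finally show ?thesis .
  qed
  show "gibbs_weight b g l (V1\<union>V2) (E1\<union>E2) (S1\<union>S2) * (if u \<in> S1 then l else 1)
         = gibbs_weight b g l V1 E1 S1 * gibbs_weight b g l V2 E2 S2"
    unfolding gibbs_weight_def c0 c1 power_add by (rule ac_help[OF lp])
qed

lemma fiber:
  assumes fin: "finite V1" "finite V2" and int: "V1 \<inter> V2 = {u}"
    and E1: "\<forall>e\<in>E1. e \<subseteq> V1 \<and> card e = 2" and E2: "\<forall>e\<in>E2. e \<subseteq> V2 \<and> card e = 2"
    and S1: "S1 \<subseteq> V1" and c: "u \<in> S1 \<longleftrightarrow> c"
  shows "(\<Sum>S2\<in>cf V2 u c. gibbs_weight b g l (V1\<union>V2) (E1\<union>E2) (S1\<union>S2)) * (if c then l else 1)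
          = gibbs_weight b g l V1 E1 S1 * ZZ b g l V2 E2 u c"
    and "(\<Sum>S2\<in>cf V2 u c. real (card (S1\<union>S2)) * gibbs_weight b g l (V1\<union>V2) (E1\<union>E2) (S1\<union>S2)) * (if c then l else 1)
          = gibbs_weight b g l V1 E1 S1 * (real (card S1) * ZZ b g l V2 E2 u c + AA b g l V2 E2 u c
              - (if c then 1 else 0) * ZZ b g l V2 E2 u c)"
proof -
  have W: "gibbs_weight b g l (V1\<union>V2) (E1\<union>E2) (S1\<union>S2) * (if c then l else 1)
         = gibbs_weight b g l V1 E1 S1 * gibbs_weight b g l V2 E2 S2"
    and C: "real (card (S1 \<union> S2)) = real (card S1) + real (card S2) - (if c then 1 else 0)"
    if "S2 \<in> cf V2 u c" for S2
  proof -
    have h: "S2 \<subseteq> V2" "u \<in> S1 \<longleftrightarrow> u \<in> S2" using that c unfolding cf_def by auto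
    show "gibbs_weight b g l (V1\<union>V2) (E1\<union>E2) (S1\<union>S2) * (if c then l else 1)
         = gibbs_weight b g l V1 E1 S1 * gibbs_weight b g l V2 E2 S2"
      using glue_weight(1)[OF fin int E1 E2 S1 h] c by simp
    have "card (S1 \<union> S2) + (if c then 1 else 0) = card S1 + card S2"
      using glue_weight(2)[OF fin int E1 E2 S1 h] c by simp
    from arg_cong[OF this, of real]
    show "real (card (S1 \<union> S2)) = real (card S1) + real (card S2) - (if c then 1 else 0)"
      by (cases c) simp_all
  qed
  show "(\<Sum>S2\<in>cf V2 u c. gibbs_weight b g l (V1\<union>V2) (E1\<union>E2) (S1\<union>S2)) * (if c then l else 1)
          = gibbs_weight b g l V1 E1 S1 * ZZ b g l V2 E2 u c"
    unfolding sum_distrib_right ZZ_def sum_distrib_left by (rule sum.cong) (auto simp: W)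
  have "(\<Sum>S2\<in>cf V2 u c. real (card (S1\<union>S2)) * gibbs_weight b g l (V1\<union>V2) (E1\<union>E2) (S1\<union>S2)) * (if c then l else 1)
     = (\<Sum>S2\<in>cf V2 u c. gibbs_weight b g l V1 E1 S1 * (real (card S1) * gibbs_weight b g l V2 E2 S2
          + real (card S2) * gibbs_weight b g l V2 E2 S2 - (if c then 1 else 0) * gibbs_weight b g l V2 E2 S2))"
    unfolding sum_distrib_right
  proof (rule sum.cong)
    fix S2 assume S2c: "S2 \<in> cf V2 u c"
    show "real (card (S1\<union>S2)) * gibbs_weight b g l (V1\<union>V2) (E1\<union>E2) (S1\<union>S2) * (if c then l else 1) =
      gibbs_weight b g l V1 E1 S1 * (real (card S1) * gibbs_weight b g l V2 E2 S2
          + real (card S2) * gibbs_weight b g l V2 E2 S2 - (if c then 1 else 0) * gibbs_weight b g l V2 E2 S2)"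
      unfolding mult.assoc W[OF S2c] C[OF S2c] by (simp add: ring_distribs mult_ac)
  qed simp
  also have "\<dots> = gibbs_weight b g l V1 E1 S1 * (real (card S1) * ZZ b g l V2 E2 u c + AA b g l V2 E2 u c
              - (if c then 1 else 0) * ZZ b g l V2 E2 u c)"
    unfolding ZZ_def AA_def sum_distrib_left[symmetric] sum.distrib sum_subtractf by simp
  finally show "(\<Sum>S2\<in>cf V2 u c. real (card (S1\<union>S2)) * gibbs_weight b g l (V1\<union>V2) (E1\<union>E2) (S1\<union>S2)) * (if c then l else 1)
          = gibbs_weight b g l V1 E1 S1 * (real (card S1) * ZZ b g l V2 E2 u c + AA b g l V2 E2 u c
              - (if c then 1 else 0) * ZZ b g l V2 E2 u c)" .
qed

lemma glue_ZZ:
  assumes fin: "finite V1" "finite V2" and int: "V1 \<inter> V2 = {u}"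
    and E1: "\<forall>e\<in>E1. e \<subseteq> V1 \<and> card e = 2" and E2: "\<forall>e\<in>E2. e \<subseteq> V2 \<and> card e = 2"
  shows "ZZ b g l (V1\<union>V2) (E1\<union>E2) u c * (if c then l else 1) = ZZ b g l V1 E1 u c * ZZ b g l V2 E2 u c"
    and "AA b g l (V1\<union>V2) (E1\<union>E2) u c * (if c then l else 1) = AA b g l V1 E1 u c * ZZ b g l V2 E2 u c
          + ZZ b g l V1 E1 u c * AA b g l V2 E2 u c - (if c then 1 else 0) * ZZ b g l V1 E1 u c * ZZ b g l V2 E2 u c"
proof -
  have gs: "(\<Sum>S\<in>cf (V1 \<union> V2) u c. f S) = (\<Sum>S1\<in>cf V1 u c. \<Sum>S2\<in>cf V2 u c. f (S1 \<union> S2))" for f :: "'a set \<Rightarrow> real"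
    using glue_sum[OF fin int, where c=c and P="\<lambda>_. True" and f=f] by (simp add: cf_def)
  have "ZZ b g l (V1\<union>V2) (E1\<union>E2) u c * (if c then l else 1) = 
     (\<Sum>S1\<in>cf V1 u c. (\<Sum>S2\<in>cf V2 u c. gibbs_weight b g l (V1\<union>V2) (E1\<union>E2) (S1\<union>S2)) * (if c then l else 1))"
    unfolding ZZ_def[of b g l "V1\<union>V2"] gs sum_distrib_right ..
  also have "\<dots> = (\<Sum>S1\<in>cf V1 u c. gibbs_weight b g l V1 E1 S1 * ZZ b g l V2 E2 u c)" (is "sum ?l _ = sum ?r _")
  proof (rule sum.cong)
    fix S1 assume "S1 \<in> cf V1 u c"
    then have "S1 \<subseteq> V1" "u \<in> S1 \<longleftrightarrow> c" by (auto simp: cf_def)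
    then show "?l S1 = ?r S1" by (rule fiber(1)[OF fin int E1 E2])
  qed simp
  finally show "ZZ b g l (V1\<union>V2) (E1\<union>E2) u c * (if c then l else 1) = ZZ b g l V1 E1 u c * ZZ b g l V2 E2 u c"
    by (simp add: ZZ_def[of b g l V1] sum_distrib_right)
  have "AA b g l (V1\<union>V2) (E1\<union>E2) u c * (if c then l else 1) =
     (\<Sum>S1\<in>cf V1 u c. (\<Sum>S2\<in>cf V2 u c. real (card (S1\<union>S2)) * gibbs_weight b g l (V1\<union>V2) (E1\<union>E2) (S1\<union>S2)) * (if c then l else 1))"
    unfolding AA_def[of b g l "V1\<union>V2"] gs sum_distrib_right ..
  also have "\<dots> = (\<Sum>S1\<in>cf V1 u c. gibbs_weight b g l V1 E1 S1 * (real (card S1) * ZZ b g l V2 E2 u c + AA b g l V2 E2 u c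
              - (if c then 1 else 0) * ZZ b g l V2 E2 u c))" (is "sum ?l _ = sum ?r _")
  proof (rule sum.cong)
    fix S1 assume "S1 \<in> cf V1 u c"
    then have "S1 \<subseteq> V1" "u \<in> S1 \<longleftrightarrow> c" by (auto simp: cf_def)
    then show "?l S1 = ?r S1" by (rule fiber(2)[OF fin int E1 E2])
  qed simp
  also have "\<dots> = (\<Sum>S1\<in>cf V1 u c. (real (card S1) * gibbs_weight b g l V1 E1 S1) * ZZ b g l V2 E2 u c
       + gibbs_weight b g l V1 E1 S1 * AA b g l V2 E2 u c
       - ((if c then 1 else 0) * ZZ b g l V2 E2 u c) * gibbs_weight b g l V1 E1 S1)"
    by (rule sum.cong) (simp_all only: ring_distribs mult_ac)
  also have "\<dots> = (\<Sum>S1\<in>cf V1 u c. real (card S1) * gibbs_weight b g l V1 E1 S1) * ZZ b g l V2 E2 u c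
       + (\<Sum>S1\<in>cf V1 u c. gibbs_weight b g l V1 E1 S1) * AA b g l V2 E2 u c
       - ((if c then 1 else 0) * ZZ b g l V2 E2 u c) * (\<Sum>S1\<in>cf V1 u c. gibbs_weight b g l V1 E1 S1)"
    unfolding sum_subtractf sum.distrib sum_distrib_left sum_distrib_right ..
  also have "\<dots> = AA b g l V1 E1 u c * ZZ b g l V2 E2 u c
          + ZZ b g l V1 E1 u c * AA b g l V2 E2 u c - (if c then 1 else 0) * ZZ b g l V1 E1 u c * ZZ b g l V2 E2 u c"
    unfolding ZZ_def[of b g l V1] AA_def[of b g l V1] by (simp only: mult_ac)
  finally show "AA b g l (V1\<union>V2) (E1\<union>E2) u c * (if c then l else 1) = AA b g l V1 E1 u c * ZZ b g l V2 E2 u c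
          + ZZ b g l V1 E1 u c * AA b g l V2 E2 u c - (if c then 1 else 0) * ZZ b g l V1 E1 u c * ZZ b g l V2 E2 u c" .
qed

lemma no_edge_small: "\<forall>e\<in>E. card e = 2 \<Longrightarrow> card A \<le> 1 \<Longrightarrow> finite A \<Longrightarrow> {e \<in> E. e \<subseteq> A} = {}"
proof (rule ccontr)
  assume E: "\<forall>e\<in>E. card e = 2" and A: "card A \<le> 1" "finite A" and "{e \<in> E. e \<subseteq> A} \<noteq> {}"
  then obtain e where "e \<in> E" "e \<subseteq> A" by auto
  then have "card e \<le> card A" using card_mono A by blast
  then show False using E \<open>e \<in> E\<close> A by fastforce
qed

lemma ZZ_pos:
  assumes sg: "simple_graph V E" and uV: "u \<in> V" and af: "antiferro b g" and l: "l > 0"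
  shows "ZZ b g l V E u c > 0"
proof -
  have fin: "finite V" and E: "\<forall>e\<in>E. card e = 2" using sg unfolding simple_graph_def by auto
  have b: "b \<ge> 0" and g: "g \<ge> 0" and nz: "b \<noteq> 0 \<or> g \<noteq> 0" using af unfolding antiferro_def by auto
  define S0 where "S0 = (if c then (if g = 0 then {u} else V) else (if b = 0 then V - {u} else {}))"
  have S0: "S0 \<in> cf V u c" using uV unfolding S0_def cf_def by auto
  have pb: "b ^ card {e \<in> E. e \<subseteq> V - S0} > 0"
  proof (cases "b = 0")
    case True
    then have "card (V - S0) \<le> 1" using uV fin nz unfolding S0_def by (cases c) (auto simp: Diff_Diff_Int)
    then have "{e \<in> E. e \<subseteq> V - S0} = {}" using no_edge_small[OF E] fin by auto
    then have "card {e \<in> E. e \<subseteq> V - S0} = 0" by (metis card.empty)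
    then show ?thesis by simp
  next
    case False then show ?thesis using b by simp
  qed
  have pg: "g ^ card {e \<in> E. e \<subseteq> S0} > 0"
  proof (cases "g = 0")
    case True
    then have "card S0 \<le> 1" using nz unfolding S0_def by (cases c) auto
    moreover have "finite S0" using S0 fin finite_subset unfolding cf_def by auto
    ultimately have "{e \<in> E. e \<subseteq> S0} = {}" using no_edge_small[OF E] by auto
    then have "card {e \<in> E. e \<subseteq> S0} = 0" by (metis card.empty)
    then show ?thesis by simp
  next
    case False then show ?thesis using g by simp
  qed
  have w0: "gibbs_weight b g l V E S0 > 0" unfolding gibbs_weight_def using pb pg l by simp
  have "gibbs_weight b g l V E S0 \<le> ZZ b g l V E u c" unfolding ZZ_def
    by (rule member_le_sum[OF S0]) (use b g l in \<open>auto simp: gibbs_weight_def\<close>, rule finite_cf[OF fin])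
  then show ?thesis using w0 by simp
qed

lemma defs_rel:
  assumes fin: "finite V" and p1: "ZZ b g l V E r True > 0" and p0: "ZZ b g l V E r False > 0"
  shows "eff_field b g l V E r = ZZ b g l V E r True / (l * ZZ b g l V E r False)"
    and "mag_gap b g l V E r = AA b g l V E r True / ZZ b g l V E r True - AA b g l V E r False / ZZ b g l V E r False"
proof -
  have cT: "configs V \<inter> {S. r \<in> S} = cf V r True" and cF: "configs V \<inter> {S. r \<notin> S} = cf V r False"
    unfolding configs_def cf_def by auto
  have Z: "partition_fn b g l V E = ZZ b g l V E r True + ZZ b g l V E r False"
  proof -
    have "configs V = cf V r True \<union> cf V r False" unfolding configs_def cf_def by auto
    then show ?thesis unfolding partition_fn_def ZZ_def
      by (simp only:) (rule sum.union_disjoint[OF finite_cf[OF fin] finite_cf[OF fin]], auto simp: cf_def)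
  qed
  have Zp: "partition_fn b g l V E > 0" using Z p1 p0 by simp
  have P: "gibbs_prob b g l V E {S. r \<in> S} = ZZ b g l V E r True / partition_fn b g l V E"
          "gibbs_prob b g l V E {S. r \<notin> S} = ZZ b g l V E r False / partition_fn b g l V E"
    unfolding gibbs_prob_def gibbs_def cT cF ZZ_def sum_divide_distrib by simp_all
  show "eff_field b g l V E r = ZZ b g l V E r True / (l * ZZ b g l V E r False)"
    unfolding eff_field_def P using Zp p0 by simp
  have C: "gibbs_cond_size b g l V E {S. r \<in> S} = AA b g l V E r True / ZZ b g l V E r True"
          "gibbs_cond_size b g l V E {S. r \<notin> S} = AA b g l V E r False / ZZ b g l V E r False"
    unfolding gibbs_cond_size_def P unfolding cT cF AA_def gibbs_def
    using Zp by (simp_all add: sum_divide_distrib[symmetric] times_divide_eq_right)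
  show "mag_gap b g l V E r = AA b g l V E r True / ZZ b g l V E r True - AA b g l V E r False / ZZ b g l V E r False"
    unfolding mag_gap_def C ..
qed

lemma alg:
  fixes b g l h0 h1 s0 s1 X R om :: real
  assumes b: "b \<ge> 0" and g: "g \<ge> 0" and bg: "b * g < 1" and nz: "b \<noteq> 0 \<or> g \<noteq> 0"
    and l: "l > 0" and h0: "h0 > 0" and h1: "h1 > 0" and X: "l * X = h1 / h0"
  assumes R_def: "R = (l*g*h1 + l*h0) / (l * (h1 + b*h0))"
  assumes om_def: "om = (1 + b * g - b * R - g / R) / (1 - b * g)"
  shows "R = (1 + g * l * X) / (b + l * X)"
    and "(l*g*(h1 + h1*(1+s1)) + l*(h0 + h0*s0)) / (l*g*h1 + l*h0) - (h1*(1+s1) + b*(h0*s0)) / (h1 + b*h0)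
          = 1 - om * (1 + (s1 - s0))"
    and "g < R" "b \<noteq> 0 \<longrightarrow> R < 1 / b" "0 < om" "om < 1"
proof -
  define y where "y = h1 / h0"
  have y: "y > 0" using h0 h1 by (simp add: y_def)
  have h1y: "h1 = y * h0" using h0 by (simp add: y_def)
  have by0: "b + y > 0" using b y by simp
  have R: "R = (1 + g*y) / (b + y)"
  proof -
    have "R = (h0*l*(1 + g*y)) / (h0*l*(b + y))" unfolding R_def h1y by (simp add: algebra_simps)
    also have "\<dots> = (1 + g*y) / (b + y)" using h0 l by simp
    finally show ?thesis .
  qed
  have gy0: "1 + g*y > 0" using g y by (simp add: add_pos_nonneg)
  have Rpos: "R > 0" using R by0 gy0 by simp
  have lX: "l * X = y" using X y_def by simp
  show "R = (1 + g * l * X) / (b + l * X)" unfolding R by (simp add: mult.assoc lX)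
  have Rg: "R - g = (1 - b*g) / (b + y)" unfolding R using by0 by (simp add: field_simps)
  have bR: "1 - b*R = y * (1 - b*g) / (b + y)" unfolding R using by0 by (simp add: field_simps)
  have om: "om = y * (1 - b*g) / ((b + y) * (1 + g*y))"
  proof -
    have bg0: "1 - b*g > 0" using bg by simp
    have om1: "om = (1 - b*R)*(R - g)/(R*(1-b*g))" unfolding om_def using Rpos bg0
      by (simp add: field_simps)
    have num: "(1-b*R)*(R-g) = y*(1-b*g)*(1-b*g)/((b+y)*(b+y))" unfolding bR Rg by simp
    have den: "R*(1-b*g) = (1+g*y)*(1-b*g)/(b+y)" unfolding R by simp
    have gen: "(yy*c*c/(d*d))/(e*c/d) = yy*c/(d*e)" if "c \<noteq> 0" "d \<noteq> 0" "e \<noteq> 0" for yy c d e :: real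
      using that by (simp add: field_simps)
    show ?thesis unfolding om1 num den using gen[of "1-b*g" "b+y" "1+g*y" y] bg0 by0 gy0 by simp

  qed
  have "(1-b*g)/(b+y) > 0" using bg by0 by simp
  then show "g < R" using Rg by linarith
  show "b \<noteq> 0 \<longrightarrow> R < 1 / b"
  proof
    assume "b \<noteq> 0" then have "b > 0" using b by simp
    have "0 < 1 - b*R" using bR y bg by0 by simp
    then show "R < 1/b" using \<open>b > 0\<close> by (simp add: field_simps)
  qed
  show "0 < om" using om y bg by0 gy0 by simp
  have "y * (1 - b*g) < (b + y) * (1 + g*y)"
  proof -
    have "(b + y) * (1 + g*y) - y * (1 - b*g) = b + g*y*y + 2*b*g*y" by (simp add: algebra_simps)
    moreover have "b + g*y*y + 2*b*g*y > 0" using nz b g y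
    proof (cases "b = 0")
      case True
      then have "g > 0" using nz g by simp
      then have "g*y*y > 0" using y by simp
      then show ?thesis using True by simp
    next
      case False
      then have "b > 0" using b by simp
      moreover have "g*y*y \<ge> 0" "b*g*y \<ge> 0" using b g y by simp_all
      ultimately show ?thesis by simp
    qed
    ultimately show ?thesis by simp
  qed
  then show "om < 1" using om by0 gy0 by simp
  show "(l*g*(h1 + h1*(1+s1)) + l*(h0 + h0*s0)) / (l*g*h1 + l*h0) - (h1*(1+s1) + b*(h0*s0)) / (h1 + b*h0)
          = 1 - om * (1 + (s1 - s0))"
  proof -
    have f1: "(l*g*(h1 + h1*(1+s1)) + l*(h0 + h0*s0)) / (l*g*h1 + l*h0) = (g*y*(2+s1) + 1 + s0)/(1+g*y)"
    proof -
      have "(l*g*(h1 + h1*(1+s1)) + l*(h0 + h0*s0)) / (l*g*h1 + l*h0) = (l*h0*(g*y*(2+s1) + 1 + s0))/(l*h0*(1+g*y))"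
        unfolding h1y by (simp add: algebra_simps)
      also have "\<dots> = (g*y*(2+s1) + 1 + s0)/(1+g*y)" using l h0 by simp
      finally show ?thesis .
    qed
    have f2: "(h1*(1+s1) + b*(h0*s0)) / (h1 + b*h0) = (y*(1+s1) + b*s0)/(b+y)"
    proof -
      have "(h1*(1+s1) + b*(h0*s0)) / (h1 + b*h0) = (h0*(y*(1+s1) + b*s0))/(h0*(b+y))"
        unfolding h1y by (simp add: algebra_simps)
      also have "\<dots> = (y*(1+s1) + b*s0)/(b+y)" using h0 by simp
      finally show ?thesis .
    qed
    have ne: "b + y \<noteq> 0" "1 + g*y \<noteq> 0" "(b+y)*(1+g*y) \<noteq> 0" "b + (y + (b * (g * y) + g * (y * y))) \<noteq> 0"
    proof -
      have D: "(b+y)*(1+g*y) > 0" using by0 gy0 by simp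
      have "b + (y + (b * (g * y) + g * (y * y))) = (b+y)*(1+g*y)" by (simp add: algebra_simps)
      then show "b + y \<noteq> 0" "1 + g*y \<noteq> 0" "(b+y)*(1+g*y) \<noteq> 0" "b + (y + (b * (g * y) + g * (y * y))) \<noteq> 0"
        using D by auto
    qed
    show ?thesis unfolding f1 f2 om using ne by (simp add: field_simps)
  qed
qed


lemma H_ind:
  fixes Vs :: "nat \<Rightarrow> 'a set" and Es :: "nat \<Rightarrow> 'a set set"
  assumes af: "antiferro b g" and l: "l > 0"
    and tr: "\<And>i. i < k \<Longrightarrow> simple_graph (Vs i) (Es i) \<and> u \<in> Vs i"
    and disj: "\<And>i j. i < k \<Longrightarrow> j < k \<Longrightarrow> i \<noteq> j \<Longrightarrow> Vs i \<inter> Vs j = {u}"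
  shows "j \<le> k \<Longrightarrow>
    ZZ b g l (insert u (\<Union>i<j. Vs i)) (\<Union>i<j. Es i) u c * (if c then l else 1) ^ j
      = (if c then l else 1) * (\<Prod>i<j. ZZ b g l (Vs i) (Es i) u c)
    \<and> AA b g l (insert u (\<Union>i<j. Vs i)) (\<Union>i<j. Es i) u c
      = ZZ b g l (insert u (\<Union>i<j. Vs i)) (\<Union>i<j. Es i) u c *
        ((if c then 1 else 0) + (\<Sum>i<j. AA b g l (Vs i) (Es i) u c / ZZ b g l (Vs i) (Es i) u c - (if c then 1 else 0)))
    \<and> ZZ b g l (insert u (\<Union>i<j. Vs i)) (\<Union>i<j. Es i) u c > 0
    \<and> finite (insert u (\<Union>i<j. Vs i))
    \<and> (\<forall>e\<in>(\<Union>i<j. Es i). e \<subseteq> insert u (\<Union>i<j. Vs i) \<and> card e = 2)"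
proof (induction j)
  case 0
  have cfu: "cf {u} u c = {if c then {u} else {}}" unfolding cf_def by (cases c) auto
  have Z: "ZZ b g l {u} {} u c = (if c then l else 1)"
    unfolding ZZ_def cfu by (simp add: gibbs_weight_def)
  have A: "AA b g l {u} {} u c = (if c then l else 0)"
    unfolding AA_def cfu by (simp add: gibbs_weight_def)
  show ?case using Z A l by simp
next
  case (Suc j)
  then have jk: "j < k" and jk': "j \<le> k" by auto
  note IH = Suc.IH[OF jk']
  define VH where "VH = insert u (\<Union>i<j. Vs i)"
  define EH where "EH = (\<Union>i<j. Es i)"
  define d where "d = (if c then l else 1)"
  define kk where "kk = (if c then 1 else 0 :: real)"
  have dpos: "d > 0" using l by (simp add: d_def)
  have VS: "insert u (\<Union>i<Suc j. Vs i) = VH \<union> Vs j" unfolding VH_def by (auto simp: lessThan_Suc)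
  have ES: "(\<Union>i<Suc j. Es i) = EH \<union> Es j" unfolding EH_def by (auto simp: lessThan_Suc)
  have sgj: "simple_graph (Vs j) (Es j)" and uj: "u \<in> Vs j" using tr[OF jk] by auto
  have finj: "finite (Vs j)" and Ej: "\<forall>e\<in>Es j. e \<subseteq> Vs j \<and> card e = 2"
    using sgj unfolding simple_graph_def by auto
  have finH: "finite VH" and EHe: "\<forall>e\<in>EH. e \<subseteq> VH \<and> card e = 2"
    using IH unfolding VH_def EH_def by auto
  have int: "VH \<inter> Vs j = {u}"
  proof
    show "VH \<inter> Vs j \<subseteq> {u}"
    proof
      fix x assume x: "x \<in> VH \<inter> Vs j"
      show "x \<in> {u}"
      proof (cases "x = u")
        case False
        then obtain i where "i < j" "x \<in> Vs i" using x unfolding VH_def by auto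
        then have "x \<in> Vs i \<inter> Vs j" using x by auto
        then show ?thesis using disj[of i j] \<open>i < j\<close> jk by auto
      qed simp
    qed
    show "{u} \<subseteq> VH \<inter> Vs j" using uj unfolding VH_def by auto
  qed
  note G = glue_ZZ[OF finH finj int EHe Ej, of b g l c]
  have Zj: "ZZ b g l (Vs j) (Es j) u c > 0" by (rule ZZ_pos[OF sgj uj af l])
  define ZH where "ZH = ZZ b g l VH EH u c"
  define AH where "AH = AA b g l VH EH u c"
  define Z' where "Z' = ZZ b g l (VH \<union> Vs j) (EH \<union> Es j) u c"
  define A' where "A' = AA b g l (VH \<union> Vs j) (EH \<union> Es j) u c"
  define Zjj where "Zjj = ZZ b g l (Vs j) (Es j) u c"
  define Ajj where "Ajj = AA b g l (Vs j) (Es j) u c"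
  define P where "P = (\<Prod>i<j. ZZ b g l (Vs i) (Es i) u c)"
  define X where "X = (\<Sum>i<j. AA b g l (Vs i) (Es i) u c / ZZ b g l (Vs i) (Es i) u c - kk)"
  have G1: "Z' * d = ZH * Zjj" and G2: "A' * d = AH * Zjj + ZH * Ajj - kk * ZH * Zjj"
    using G unfolding Z'_def ZH_def Zjj_def A'_def AH_def Ajj_def d_def kk_def by auto
  have I1: "ZH * d ^ j = d * P" and I2: "AH = ZH * (kk + X)" and I3: "ZH > 0"
    using IH unfolding ZH_def AH_def VH_def EH_def d_def P_def X_def kk_def by auto
  have Zjp: "Zjj > 0" using Zj unfolding Zjj_def .
  have C1: "Z' * d ^ Suc j = d * (P * Zjj)"
  proof -
    have "Z' * d ^ Suc j = (Z' * d) * d ^ j" by (simp add: mult_ac)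
    also have "\<dots> = (ZH * d ^ j) * Zjj" unfolding G1 by (simp add: mult_ac)
    finally show ?thesis unfolding I1 by (simp add: mult_ac)
  qed
  have C2: "A' = Z' * (kk + (X + (Ajj / Zjj - kk)))"
  proof -
    have "A' * d = Z' * (kk + (X + (Ajj / Zjj - kk))) * d"
    proof -
      have "A' * d = ZH * Zjj * (kk + X) + ZH * Ajj - kk * ZH * Zjj" unfolding G2 I2 by (simp add: mult_ac)
      also have "\<dots> = (ZH * Zjj) * (kk + (X + (Ajj / Zjj - kk)))" using Zjp by (simp add: field_simps)
      also have "\<dots> = Z' * (kk + (X + (Ajj / Zjj - kk))) * d" unfolding G1[symmetric] by (simp add: mult_ac)
      finally show ?thesis .
    qed
    then show ?thesis using dpos by simp
  qed
  have C3: "Z' > 0"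
  proof -
    have "Z' * d > 0" unfolding G1 using I3 Zjp by simp
    then show ?thesis using dpos by (simp add: zero_less_mult_iff)
  qed
  have finS: "finite (VH \<union> Vs j)" using finH finj by simp
  have ES2: "\<forall>e\<in>EH \<union> Es j. e \<subseteq> VH \<union> Vs j \<and> card e = 2" using EHe Ej by blast
  have prodS: "(\<Prod>i<Suc j. ZZ b g l (Vs i) (Es i) u c) = P * Zjj" by (simp add: P_def Zjj_def)
  have sumS: "(\<Sum>i<Suc j. AA b g l (Vs i) (Es i) u c / ZZ b g l (Vs i) (Es i) u c - kk) = X + (Ajj / Zjj - kk)"
    by (simp add: X_def Ajj_def Zjj_def)
  show ?case unfolding VS ES d_def[symmetric] kk_def[symmetric] prodS sumS
    using C1 C2 C3 finS ES2 unfolding Z'_def A'_def by auto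
qed

lemma single_filter: "{e \<in> {X}. P e} = (if P X then {X} else {})" by auto
lemma single_filter2: "{e. e = X \<and> P e} = (if P X then {X} else {})" by auto

lemma star:
  assumes fin: "finite V2" and uV: "u \<in> V2" and rV: "r \<notin> V2" and ru: "r \<noteq> u"
    and E2: "\<forall>e\<in>E2. e \<subseteq> V2 \<and> card e = 2" and l: "l > 0"
  shows "ZZ b g l ({r,u} \<union> V2) ({{r,u}} \<union> E2) r True = l*g*ZZ b g l V2 E2 u True + l*ZZ b g l V2 E2 u False"
    and "ZZ b g l ({r,u} \<union> V2) ({{r,u}} \<union> E2) r False = ZZ b g l V2 E2 u True + b*ZZ b g l V2 E2 u False"
    and "AA b g l ({r,u} \<union> V2) ({{r,u}} \<union> E2) r True
          = l*g*(ZZ b g l V2 E2 u True + AA b g l V2 E2 u True) + l*(ZZ b g l V2 E2 u False + AA b g l V2 E2 u False)"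
    and "AA b g l ({r,u} \<union> V2) ({{r,u}} \<union> E2) r False = AA b g l V2 E2 u True + b*AA b g l V2 E2 u False"
proof -
  define V1 where "V1 = {r,u}"
  define E1 where "E1 = {{r,u}}"
  have fin1: "finite V1" unfolding V1_def by simp
  have int: "V1 \<inter> V2 = {u}" unfolding V1_def using uV rV by auto
  have E1e: "\<forall>e\<in>E1. e \<subseteq> V1 \<and> card e = 2" unfolding E1_def V1_def using ru by auto
  define T where "T c' d = (if c' then {r} else {}) \<union> (if d then {u} else {})" for c' d
  have sub_dec: "S = (if r \<in> S then {r} else {}) \<union> (if u \<in> S then {u} else {})" if "S \<subseteq> {r,u}" for S
    using that by auto
  have sing: "{S. S \<subseteq> V1 \<and> (u \<in> S) = d \<and> (r \<in> S) = c'} = {T c' d}" for c' d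
  proof
    show "{S. S \<subseteq> V1 \<and> (u \<in> S) = d \<and> (r \<in> S) = c'} \<subseteq> {T c' d}"
    proof
      fix S assume "S \<in> {S. S \<subseteq> V1 \<and> (u \<in> S) = d \<and> (r \<in> S) = c'}"
      then have "S \<subseteq> {r,u}" "(u \<in> S) = d" "(r \<in> S) = c'" unfolding V1_def by auto
      then show "S \<in> {T c' d}" using sub_dec[of S] unfolding T_def by auto
    qed
    show "{T c' d} \<subseteq> {S. S \<subseteq> V1 \<and> (u \<in> S) = d \<and> (r \<in> S) = c'}"
      unfolding T_def V1_def using ru by auto
  qed
  have split: "(\<Sum>S\<in>cf (V1 \<union> V2) r c'. f S)
      = (\<Sum>S2\<in>cf V2 u True. f (T c' True \<union> S2)) + (\<Sum>S2\<in>cf V2 u False. f (T c' False \<union> S2))"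
    for c' and f :: "'a set \<Rightarrow> real"
  proof -
    define A where "A d = {S. S \<subseteq> V1 \<union> V2 \<and> (u \<in> S) = d \<and> (r \<in> S \<inter> V1) = c'}" for d
    have cfA: "cf (V1 \<union> V2) r c' = A True \<union> A False" unfolding cf_def A_def V1_def by auto
    have finA: "finite (A d)" for d
      by (rule finite_subset[of _ "Pow (V1 \<union> V2)"]) (auto simp: A_def fin fin1)
    have "(\<Sum>S\<in>cf (V1 \<union> V2) r c'. f S) = (\<Sum>S\<in>A True. f S) + (\<Sum>S\<in>A False. f S)"
      unfolding cfA by (rule sum.union_disjoint[OF finA finA]) (auto simp: A_def)
    moreover have "(\<Sum>S\<in>A d. f S) = (\<Sum>S2\<in>cf V2 u d. f (T c' d \<union> S2))" for d
      using glue_sum[OF fin1 fin int, where c=d and P="\<lambda>S1. (r \<in> S1) = c'" and f=f]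
      unfolding A_def sing by simp
    ultimately show ?thesis by simp
  qed
  have Tsub: "T c' d \<subseteq> V1" for c' d unfolding T_def V1_def by auto
  have Tu: "u \<in> T c' d \<longleftrightarrow> d" for c' d unfolding T_def using ru by auto
  define dl where "dl d = (if d then l else 1)" for d
  have dlp: "dl d > 0" for d using l by (simp add: dl_def)
  have fz: "(\<Sum>S2\<in>cf V2 u d. gibbs_weight b g l (V1 \<union> V2) (E1 \<union> E2) (T c' d \<union> S2))
      = gibbs_weight b g l V1 E1 (T c' d) * ZZ b g l V2 E2 u d / dl d" for c' d
    using fiber(1)[OF fin1 fin int E1e E2 Tsub Tu, where b=b and g=g and l=l] dlp[of d]
    unfolding dl_def by (simp add: eq_divide_eq)
  have fa: "(\<Sum>S2\<in>cf V2 u d. real (card (T c' d \<union> S2)) * gibbs_weight b g l (V1 \<union> V2) (E1 \<union> E2) (T c' d \<union> S2))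
      = gibbs_weight b g l V1 E1 (T c' d) * (real (card (T c' d)) * ZZ b g l V2 E2 u d + AA b g l V2 E2 u d
              - (if d then 1 else 0) * ZZ b g l V2 E2 u d) / dl d" for c' d
    using fiber(2)[OF fin1 fin int E1e E2 Tsub Tu, where b=b and g=g and l=l] dlp[of d]
    unfolding dl_def by (simp add: eq_divide_eq)
  have w11: "gibbs_weight b g l V1 E1 (T True True) = l^2 * g" and c11: "card (T True True) = 2"
    unfolding T_def V1_def E1_def gibbs_weight_def using ru by (simp_all add: single_filter single_filter2 power2_eq_square)
  have w10: "gibbs_weight b g l V1 E1 (T True False) = l" and c10: "card (T True False) = 1"
    unfolding T_def V1_def E1_def gibbs_weight_def using ru by (simp_all add: single_filter single_filter2 power2_eq_square)
  have w01: "gibbs_weight b g l V1 E1 (T False True) = l" and c01: "card (T False True) = 1"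
    unfolding T_def V1_def E1_def gibbs_weight_def using ru by (simp_all add: single_filter single_filter2 power2_eq_square)
  have w00: "gibbs_weight b g l V1 E1 (T False False) = b" and c00: "card (T False False) = 0"
    unfolding T_def V1_def E1_def gibbs_weight_def using ru by (simp_all add: single_filter single_filter2 power2_eq_square)
  have ZS: "ZZ b g l (V1 \<union> V2) (E1 \<union> E2) r c' =
      gibbs_weight b g l V1 E1 (T c' True) * ZZ b g l V2 E2 u True / l
      + gibbs_weight b g l V1 E1 (T c' False) * ZZ b g l V2 E2 u False" for c'
    unfolding ZZ_def[of b g l "V1 \<union> V2"] split fz unfolding ZZ_def dl_def by simp
  have AS: "AA b g l (V1 \<union> V2) (E1 \<union> E2) r c' =
      gibbs_weight b g l V1 E1 (T c' True) * (real (card (T c' True)) * ZZ b g l V2 E2 u True + AA b g l V2 E2 u True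
              - ZZ b g l V2 E2 u True) / l
      + gibbs_weight b g l V1 E1 (T c' False) * (real (card (T c' False)) * ZZ b g l V2 E2 u False + AA b g l V2 E2 u False)" for c'
    unfolding AA_def[of b g l "V1 \<union> V2"] split fa unfolding AA_def dl_def by simp
  have "ZZ b g l (V1 \<union> V2) (E1 \<union> E2) r True = l*g*ZZ b g l V2 E2 u True + l*ZZ b g l V2 E2 u False"
    unfolding ZS w11 w10 using l by (simp add: power2_eq_square)
  then show "ZZ b g l ({r,u} \<union> V2) ({{r,u}} \<union> E2) r True = l*g*ZZ b g l V2 E2 u True + l*ZZ b g l V2 E2 u False"
    unfolding V1_def E1_def .
  have "ZZ b g l (V1 \<union> V2) (E1 \<union> E2) r False = ZZ b g l V2 E2 u True + b*ZZ b g l V2 E2 u False"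
    unfolding ZS w01 w00 using l by simp
  then show "ZZ b g l ({r,u} \<union> V2) ({{r,u}} \<union> E2) r False = ZZ b g l V2 E2 u True + b*ZZ b g l V2 E2 u False"
    unfolding V1_def E1_def .
  have "AA b g l (V1 \<union> V2) (E1 \<union> E2) r True
          = l*g*(ZZ b g l V2 E2 u True + AA b g l V2 E2 u True) + l*(ZZ b g l V2 E2 u False + AA b g l V2 E2 u False)"
    unfolding AS w11 w10 c11 c10 using l by (simp add: power2_eq_square field_simps)
  then show "AA b g l ({r,u} \<union> V2) ({{r,u}} \<union> E2) r True
          = l*g*(ZZ b g l V2 E2 u True + AA b g l V2 E2 u True) + l*(ZZ b g l V2 E2 u False + AA b g l V2 E2 u False)"
    unfolding V1_def E1_def .
  have "AA b g l (V1 \<union> V2) (E1 \<union> E2) r False = AA b g l V2 E2 u True + b*AA b g l V2 E2 u False"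
    unfolding AS w01 w00 c01 c00 using l by simp
  then show "AA b g l ({r,u} \<union> V2) ({{r,u}} \<union> E2) r False = AA b g l V2 E2 u True + b*AA b g l V2 E2 u False"
    unfolding V1_def E1_def .
qed

theorem lemma3p1:
  fixes b g l :: real and k :: nat
    and Vs :: "nat \<Rightarrow> 'a set" and Es :: "nat \<Rightarrow> 'a set set"
    and V :: "'a set" and E :: "'a set set" and r u :: 'a
  assumes af: "antiferro b g" and lpos: "l > 0"
    and trees: "\<And>i. i < k \<Longrightarrow> rooted_tree (Vs i) (Es i) u"
    and disj: "\<And>i j. i < k \<Longrightarrow> j < k \<Longrightarrow> i \<noteq> j \<Longrightarrow> Vs i \<inter> Vs j = {u}"
    and r_new: "\<And>i. i < k \<Longrightarrow> r \<notin> Vs i" and ru: "r \<noteq> u"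
    and V_def: "V = {r, u} \<union> (\<Union>i<k. Vs i)"
    and E_def: "E = {{r, u}} \<union> (\<Union>i<k. Es i)"
  shows "(eff_field b g l V E r =
           (1 + g * l * (\<Prod>i<k. eff_field b g l (Vs i) (Es i) u))
           / (b + l * (\<Prod>i<k. eff_field b g l (Vs i) (Es i) u)))
    \<and> (mag_gap b g l V E r =
           1 - omega b g (eff_field b g l V E r)
               * (1 + (\<Sum>i<k. mag_gap b g l (Vs i) (Es i) u - 1)))
    \<and> (g < eff_field b g l V E r \<and> (b \<noteq> 0 \<longrightarrow> eff_field b g l V E r < 1 / b))
    \<and> (0 < omega b g (eff_field b g l V E r) \<and> omega b g (eff_field b g l V E r) < 1)"
proof -
  have b: "b \<ge> 0" and g: "g \<ge> 0" and bg: "b * g < 1" and nz: "b \<noteq> 0 \<or> g \<noteq> 0"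
    using af unfolding antiferro_def by auto
  have tr: "\<And>i. i < k \<Longrightarrow> simple_graph (Vs i) (Es i) \<and> u \<in> Vs i"
    using trees unfolding rooted_tree_def by auto
  define VH where "VH = insert u (\<Union>i<k. Vs i)"
  define EH where "EH = (\<Union>i<k. Es i)"
  define Z1 where "Z1 i = ZZ b g l (Vs i) (Es i) u True" for i
  define Z0 where "Z0 i = ZZ b g l (Vs i) (Es i) u False" for i
  define A1 where "A1 i = AA b g l (Vs i) (Es i) u True" for i
  define A0 where "A0 i = AA b g l (Vs i) (Es i) u False" for i
  define h1 where "h1 = ZZ b g l VH EH u True"
  define h0 where "h0 = ZZ b g l VH EH u False"
  define a1 where "a1 = AA b g l VH EH u True"
  define a0 where "a0 = AA b g l VH EH u False"
  define s1 where "s1 = (\<Sum>i<k. A1 i / Z1 i - 1)"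
  define s0 where "s0 = (\<Sum>i<k. A0 i / Z0 i)"
  note HT = H_ind[where Vs=Vs and Es=Es and k=k and u=u and b=b and g=g and l=l and j=k and c=True, OF af lpos tr disj order_refl]
  note HF = H_ind[where Vs=Vs and Es=Es and k=k and u=u and b=b and g=g and l=l and j=k and c=False, OF af lpos tr disj order_refl]
  have H1: "h1 * l ^ k = l * (\<Prod>i<k. Z1 i)" and H2: "a1 = h1 * (1 + s1)" and h1p: "h1 > 0"
    and finH: "finite VH" and EHe: "\<forall>e\<in>EH. e \<subseteq> VH \<and> card e = 2"
    using HT unfolding h1_def a1_def Z1_def A1_def s1_def VH_def EH_def by auto
  have H0: "h0 = (\<Prod>i<k. Z0 i)" and H3: "a0 = h0 * s0" and h0p: "h0 > 0"
    using HF unfolding h0_def a0_def Z0_def A0_def s0_def VH_def EH_def by auto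
  have uVH: "u \<in> VH" unfolding VH_def by simp
  have rVH: "r \<notin> VH" unfolding VH_def using r_new ru by auto
  have VV: "V = {r,u} \<union> VH" unfolding V_def VH_def by auto
  have EE: "E = {{r,u}} \<union> EH" unfolding E_def EH_def ..
  note ST = star[OF finH uVH rVH ru EHe lpos, where b=b and g=g]
  have ZGT: "ZZ b g l V E r True = l*g*h1 + l*h0" and ZGF: "ZZ b g l V E r False = h1 + b*h0"
    and AGT: "AA b g l V E r True = l*g*(h1 + a1) + l*(h0 + a0)"
    and AGF: "AA b g l V E r False = a1 + b*a0"
    using ST unfolding VV EE h1_def h0_def a1_def a0_def by auto
  have ZGTp: "l*g*h1 + l*h0 > 0" using lpos g h1p h0p by (simp add: add_nonneg_pos)
  have ZGFp: "h1 + b*h0 > 0" using b h1p h0p by (simp add: add_pos_nonneg)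
  have finV: "finite V" unfolding VV using finH by simp
  note DG = defs_rel[OF finV, where b=b and g=g and l=l and E=E and r=r]
  have effG: "eff_field b g l V E r = (l*g*h1 + l*h0) / (l * (h1 + b*h0))"
    using DG(1) ZGT ZGF ZGTp ZGFp by simp
  have magG: "mag_gap b g l V E r = (l*g*(h1 + h1*(1+s1)) + l*(h0 + h0*s0)) / (l*g*h1 + l*h0)
        - (h1*(1+s1) + b*(h0*s0)) / (h1 + b*h0)"
    using DG(2) ZGT ZGF AGT AGF ZGTp ZGFp H2 H3 by simp
  have Zi: "Z1 i > 0" "Z0 i > 0" if "i < k" for i
    using ZZ_pos[OF conjunct1[OF tr[OF that]] conjunct2[OF tr[OF that]] af lpos] unfolding Z1_def Z0_def by auto
  have finVi: "finite (Vs i)" if "i < k" for i using tr[OF that] unfolding simple_graph_def by auto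
  have effi: "eff_field b g l (Vs i) (Es i) u = Z1 i / (l * Z0 i)"
    and magi: "mag_gap b g l (Vs i) (Es i) u = A1 i / Z1 i - A0 i / Z0 i" if "i < k" for i
    using defs_rel[OF finVi[OF that], where b=b and g=g and l=l and E="Es i" and r=u] Zi[OF that]
    unfolding Z1_def Z0_def A1_def A0_def by auto
  define X where "X = (\<Prod>i<k. eff_field b g l (Vs i) (Es i) u)"
  have X1: "X = (\<Prod>i<k. Z1 i) / (l ^ k * (\<Prod>i<k. Z0 i))"
  proof -
    have "X = (\<Prod>i<k. Z1 i / (l * Z0 i))" unfolding X_def by (rule prod.cong) (simp_all add: effi)
    also have "\<dots> = (\<Prod>i<k. Z1 i) / (\<Prod>i<k. l * Z0 i)" by (rule prod_dividef)
    also have "(\<Prod>i<k. l * Z0 i) = l ^ k * (\<Prod>i<k. Z0 i)" by (simp add: prod.distrib)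
    finally show ?thesis .
  qed
  have lX: "l * X = h1 / h0"
  proof -
    have P1: "(\<Prod>i<k. Z1 i) = h1 * l ^ k / l" using H1 lpos by (simp add: field_simps)
    show ?thesis unfolding X1 P1 H0[symmetric] using lpos h0p by (simp add: field_simps)
  qed
  have sumM: "(\<Sum>i<k. mag_gap b g l (Vs i) (Es i) u - 1) = s1 - s0"
  proof -
    have "(\<Sum>i<k. mag_gap b g l (Vs i) (Es i) u - 1) = (\<Sum>i<k. (A1 i / Z1 i - 1) - A0 i / Z0 i)"
      by (rule sum.cong) (simp_all add: magi)
    also have "\<dots> = s1 - s0" unfolding s1_def s0_def by (rule sum_subtractf)
    finally show ?thesis .
  qed
  note AL = alg[OF b g bg nz lpos h0p h1p lX effG refl[of "omega b g (eff_field b g l V E r)", unfolded omega_def]]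
  show ?thesis
    unfolding X_def[symmetric] sumM magG
    using AL by (simp add: omega_def)
qed

end
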